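(* Let $G$ be a paratopological group with binary operation $\star$, let $\kappa$ be a regular uncountable cardinal, and let $T\subset G$ be a subspace of $G$ which is a stationary subset of $\kappa$ (that is, $T$ is identified with a stationary subset of $\kappa$, and the topology $T$ inherits from $G$ is the order topology of $T$ as a subspace of $\kappa$). Then one can choose a subset $S\subset T$ that is closed in $T$ and unbounded in $\kappa$, an ordinal $\lambda\in T$, and a set $L\subset [0,\lambda]_T=\{t\in T: t\le\lambda\}$ such that: (1) $\lambda\in L$; (2) $\lambda$ is a limit point of $L$; (3) the map $L\times S\to G$, $(x,y)\mapsto x\star y$, is injective.
   Context: All spaces are Tychonoff. A paratopological group is a group endowed with a topology for which the group multiplication $G\times G\to G$ is (jointly) continuous. Ordinals and their subsets carry the order topology and the subspace topology respectively. A subset of a regular uncountable cardinal $\kappa$ is stationary if it meets every closed unbounded subset of $\kappa$. *)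

theory Defs
  imports "HOL-Analysis.Analysis" "HOL-Algebra.Group" "HOL-Library.Equipollence"
begin

definition paratopological_group :: "('a, 'b) monoid_scheme \<Rightarrow> 'a topology \<Rightarrow> bool" where
  "paratopological_group G X \<longleftrightarrow> group G \<and> topspace X = carrier G \<and>
     continuous_map (prod_topology X X) X (\<lambda>(x, y). x \<otimes>\<^bsub>G\<^esub> y)"

definition tychonoff_space :: "'a topology \<Rightarrow> bool" where
  "tychonoff_space X \<longleftrightarrow> t1_space X \<and> completely_regular_space X"

definition ord_top :: "('k::linorder) topology" where
  "ord_top = topology_generated_by (range lessThan \<union> range greaterThan)"

text \<open>The well-ordered type 'k, with its order, represents a regular uncountable
  cardinal \<kappa> (its elements are the ordinals below \<kappa>).\<close>
definition regular_uncountable_cardinal_type :: "('k::wellorder) itself \<Rightarrow> bool" where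
  "regular_uncountable_cardinal_type _ \<longleftrightarrow>
     uncountable (UNIV :: 'k set) \<and>
     (\<forall>a::'k. {..<a} \<prec> (UNIV :: 'k set)) \<and>
     (\<forall>A::'k set. (\<forall>a. \<exists>b\<in>A. a \<le> b) \<longrightarrow> A \<approx> (UNIV :: 'k set))"

definition unbounded :: "('k::linorder) set \<Rightarrow> bool" where
  "unbounded A \<longleftrightarrow> (\<forall>a. \<exists>b\<in>A. a \<le> b)"

definition club :: "('k::linorder) set \<Rightarrow> bool" where
  "club C \<longleftrightarrow> closedin ord_top C \<and> unbounded C"

definition stationary :: "('k::linorder) set \<Rightarrow> bool" where
  "stationary T \<longleftrightarrow> (\<forall>C. club C \<longrightarrow> T \<inter> C \<noteq> {})"

end

theory Submission
  imports Defs
begin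

lemma open_lt: "openin ord_top {..<b::'k::linorder}"
  unfolding ord_top_def openin_topology_generated_by_iff
  by (rule generate_topology_on.Basis) auto

lemma open_gt: "openin ord_top {b::'k::linorder<..}"
  unfolding ord_top_def openin_topology_generated_by_iff
  by (rule generate_topology_on.Basis) auto

lemma reg_D:
  assumes "regular_uncountable_cardinal_type TYPE('k::wellorder)"
  shows "uncountable (UNIV :: 'k set)" "\<And>a::'k. {..<a} \<prec> (UNIV :: 'k set)"
    "\<And>A::'k set. (\<forall>a. \<exists>b\<in>A. a \<le> b) \<Longrightarrow> A \<approx> (UNIV :: 'k set)"
  using assms unfolding regular_uncountable_cardinal_type_def by auto

lemma no_max:
  assumes R: "regular_uncountable_cardinal_type TYPE('k::wellorder)"
  shows "\<exists>w. (x::'k) < w"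
proof (rule ccontr)
  assume "\<not> ?thesis"
  then have "UNIV = insert x {..<x}" using le_neq_trans by (auto simp: not_less)
  moreover have "infinite {..<x}"
  proof
    assume "finite {..<x}"
    then have "finite (UNIV::'k set)" using \<open>UNIV = insert x {..<x}\<close> by (metis finite_insert)
    with reg_D(1)[OF R] show False using countable_finite by blast
  qed
  ultimately have "(UNIV::'k set) \<approx> {..<x}" using infinite_insert_eqpoll[of "{..<x}" x] by simp
  with reg_D(2)[OF R, of x] show False
    by (meson eq_lesspoll_trans lesspoll_def eqpoll_refl)
qed

lemma succ_ex:
  assumes R: "regular_uncountable_cardinal_type TYPE('k::wellorder)"
  shows "\<exists>w. (x::'k) < w \<and> (\<forall>b. b < w \<longrightarrow> b \<le> x)"
proof -
  obtain w0 where "x < w0" using no_max[OF R] by blast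
  define w where "w = (LEAST w. x < w)"
  have "x < w" unfolding w_def by (rule LeastI) fact
  moreover have "b < w \<Longrightarrow> b \<le> x" for b
    unfolding w_def using not_less_Least not_less by blast
  ultimately show ?thesis by blast
qed

lemma topspace_ord_top:
  assumes R: "regular_uncountable_cardinal_type TYPE('k::wellorder)"
  shows "topspace (ord_top :: 'k topology) = UNIV"
proof -
  have "x \<in> topspace (ord_top :: 'k topology)" for x :: 'k
  proof -
    obtain w where "x < w" using no_max[OF R] by blast
    then show ?thesis using open_lt[of w] openin_subset by fastforce
  qed
  then show ?thesis by auto
qed

lemma small_bounded:
  assumes R: "regular_uncountable_cardinal_type TYPE('k::wellorder)"
    and "(A::'k set) \<prec> (UNIV :: 'k set)"
  shows "\<exists>u. \<forall>y\<in>A. y < u"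
proof (rule ccontr)
  assume "\<not> ?thesis"
  then have "\<forall>a. \<exists>b\<in>A. a \<le> b" by (auto simp: not_less)
  then have "A \<approx> (UNIV::'k set)" using reg_D(3)[OF R] by blast
  with assms(2) show False by (simp add: lesspoll_def)
qed

lemma countable_small:
  assumes R: "regular_uncountable_cardinal_type TYPE('k::wellorder)"
    and "countable (A::'k set)"
  shows "A \<prec> (UNIV :: 'k set)"
  unfolding lesspoll_def
proof
  show "A \<lesssim> (UNIV::'k set)" by (simp add: subset_imp_lepoll)
  show "\<not> A \<approx> (UNIV::'k set)"
  proof
    assume "A \<approx> (UNIV::'k set)"
    then obtain f where "bij_betw f A (UNIV::'k set)" unfolding eqpoll_def by blast
    then have "UNIV = f ` A" by (simp add: bij_betw_def)
    then have "countable (UNIV::'k set)" using assms(2) by (metis countable_image)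
    with reg_D(1)[OF R] show False by simp
  qed
qed

lemma omega_sup:
  assumes R: "regular_uncountable_cardinal_type TYPE('k::wellorder)"
  shows "\<exists>\<alpha>. (\<forall>n. (f::nat\<Rightarrow>'k) n \<le> \<alpha>) \<and> (\<forall>c<\<alpha>. \<exists>n. c < f n)"
proof -
  have "range f \<prec> (UNIV::'k set)" by (rule countable_small[OF R]) simp
  then obtain u where u: "\<forall>y\<in>range f. y < u"
    using small_bounded[OF R] by blast
  define \<alpha> where "\<alpha> = (LEAST a. \<forall>n. f n \<le> a)"
  have "\<forall>n. f n \<le> u" using u by (simp add: less_imp_le)
  then have "\<forall>n. f n \<le> \<alpha>" unfolding \<alpha>_def by (rule LeastI)
  moreover have "\<exists>n. c < f n" if "c < \<alpha>" for c
  proof (rule ccontr)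
    assume "\<not> ?thesis"
    then have "\<forall>n. f n \<le> c" by (auto simp: not_less)
    then have "\<alpha> \<le> c" unfolding \<alpha>_def by (rule Least_le)
    with that show False by simp
  qed
  ultimately show ?thesis by blast
qed


lemma open_ival: "openin ord_top ({a<..} \<inter> {..<b::'k::linorder})"
  by (simp add: open_gt open_lt openin_Int)

lemma closedI_ord:
  assumes R: "regular_uncountable_cardinal_type TYPE('k::wellorder)"
    and H: "\<And>x. x \<notin> C \<Longrightarrow> \<exists>U. openin ord_top U \<and> x \<in> U \<and> U \<inter> C = {}"
  shows "closedin ord_top (C::'k set)"
proof -
  have "openin ord_top (- C)"
  proof (subst openin_subopen, intro ballI)
    fix x assume "x \<in> - C"
    then obtain U where "openin ord_top U" "x \<in> U" "U \<inter> C = {}" using H by auto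
    then show "\<exists>T. openin ord_top T \<and> x \<in> T \<and> T \<subseteq> - C" by blast
  qed
  then show ?thesis unfolding closedin_def topspace_ord_top[OF R] by (simp add: Compl_eq_Diff_UNIV)
qed

lemma closed_ge:
  assumes R: "regular_uncountable_cardinal_type TYPE('k::wellorder)"
  shows "closedin ord_top {a::'k..}"
proof (rule closedI_ord[OF R])
  fix x assume "x \<notin> {a..}"
  then show "\<exists>U. openin ord_top U \<and> x \<in> U \<and> U \<inter> {a..} = {}"
    by (intro exI[of _ "{..<a}"]) (auto simp: open_lt)
qed

lemma club_Int_ge:
  assumes R: "regular_uncountable_cardinal_type TYPE('k::wellorder)"
    and "club C"
  shows "club (C \<inter> {a::'k..})"
proof -
  have "closedin ord_top (C \<inter> {a..})"
    using assms(2) closed_ge[OF R] unfolding club_def by (simp add: closedin_Int)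
  moreover have "unbounded (C \<inter> {a..})"
    unfolding unbounded_def
  proof
    fix b
    obtain c where "c \<in> C" "max a b \<le> c" using assms(2) unfolding club_def unbounded_def by blast
    then show "\<exists>c\<in>C \<inter> {a..}. b \<le> c" by auto
  qed
  ultimately show ?thesis unfolding club_def by blast
qed

lemma stat_unbounded:
  assumes R: "regular_uncountable_cardinal_type TYPE('k::wellorder)"
    and "stationary T" "club C"
  shows "unbounded (T \<inter> (C::'k set))"
  unfolding unbounded_def
proof
  fix a
  have "club (C \<inter> {a..})" by (rule club_Int_ge[OF R assms(3)])
  then have "T \<inter> (C \<inter> {a..}) \<noteq> {}" using assms(2) unfolding stationary_def by blast
  then show "\<exists>b\<in>T \<inter> C. a \<le> b" by auto
qed

lemma closure_club:
  assumes R: "regular_uncountable_cardinal_type TYPE('k::wellorder)"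
    and bnd: "\<And>z. \<exists>u. \<forall>y\<in>N z. y < u"
  shows "club {\<alpha>::'k. \<forall>z<\<alpha>. \<forall>y\<in>N z. y < \<alpha>}" (is "club ?C")
proof -
  define b where "b z = (SOME u. \<forall>y\<in>N z. y < u)" for z
  have b0: "\<forall>y\<in>N z. y < b z" for z
    unfolding b_def by (rule someI_ex[OF bnd[of z]])
  have b: "y \<in> N z \<Longrightarrow> y < b z" for y z using b0[of z] by blast
  have F: "\<exists>u. \<beta> \<le> u \<and> (\<forall>z<\<beta>. b z \<le> u)" for \<beta>
  proof -
    have "b ` {..<\<beta>} \<lesssim> {..<\<beta>}" by (rule image_lepoll)
    then have "b ` {..<\<beta>} \<prec> (UNIV::'k set)" using reg_D(2)[OF R] by (rule lesspoll_trans1)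
    then obtain u where "\<forall>y\<in>b ` {..<\<beta>}. y < u" using small_bounded[OF R] by blast
    then show ?thesis by (intro exI[of _ "max \<beta> u"]) (auto intro: less_imp_le simp: le_max_iff_disj)
  qed
  define F where "F \<beta> = (SOME u. \<beta> \<le> u \<and> (\<forall>z<\<beta>. b z \<le> u))" for \<beta>
  have F12: "\<beta> \<le> F \<beta> \<and> (\<forall>z<\<beta>. b z \<le> F \<beta>)" for \<beta>
    unfolding F_def by (rule someI_ex[OF F[of \<beta>]])
  have F1: "\<beta> \<le> F \<beta>" and F2: "z < \<beta> \<Longrightarrow> b z \<le> F \<beta>" for \<beta> z
    using F12[of \<beta>] by auto
  have unb: "unbounded ?C"
    unfolding unbounded_def
  proof
    fix a
    define f where "f n = (F ^^ n) a" for n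
    obtain \<alpha> where al1: "\<forall>n. f n \<le> \<alpha>" and al2: "\<forall>c<\<alpha>. \<exists>n. c < f n"
      using omega_sup[OF R, of f] by blast
    have "\<alpha> \<in> ?C"
    proof (intro CollectI allI impI ballI)
      fix z y assume "z < \<alpha>" "y \<in> N z"
      then obtain n where "z < f n" using al2 by blast
      then have "b z \<le> f (Suc n)" unfolding f_def by (simp add: F2)
      also have "\<dots> \<le> \<alpha>" using al1 by blast
      finally show "y < \<alpha>" using b[OF \<open>y \<in> N z\<close>] by simp
    qed
    moreover have "a \<le> \<alpha>" using al1[rule_format, of 0] by (simp add: f_def)
    ultimately show "\<exists>c\<in>?C. a \<le> c" by blast
  qed
  have "closedin ord_top ?C"
  proof (rule closedI_ord[OF R])
    fix x assume "x \<notin> ?C"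
    then obtain z y where zy: "z < x" "y \<in> N z" "x \<le> y" by (auto simp: not_less)
    obtain w where w: "y < w" "\<And>c. c < w \<Longrightarrow> c \<le> y" using succ_ex[OF R, of y] by blast
    show "\<exists>U. openin ord_top U \<and> x \<in> U \<and> U \<inter> ?C = {}"
    proof (intro exI conjI)
      show "openin ord_top ({z<..} \<inter> {..<w})" by (rule open_ival)
      show "x \<in> {z<..} \<inter> {..<w}" using zy w by auto
      show "({z<..} \<inter> {..<w}) \<inter> ?C = {}"
      proof (rule ccontr)
        assume "\<not> ?thesis"
        then obtain c where "z < c" "c < w" "c \<in> ?C" by auto
        then have "y < c" using zy by blast
        with w(2)[OF \<open>c < w\<close>] show False by simp
      qed
    qed
  qed
  with unb show ?thesis unfolding club_def by blast
qed


lemma grp_lcan: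
  assumes "group G" "a \<in> carrier G" "b \<in> carrier G" "c \<in> carrier G" "a \<otimes>\<^bsub>G\<^esub> b = a \<otimes>\<^bsub>G\<^esub> c"
  shows "b = c"
  using assms by (metis group.Units_eq group.is_monoid monoid.Units_l_cancel)

lemma grp_rcan:
  assumes "group G" "a \<in> carrier G" "b \<in> carrier G" "c \<in> carrier G" "b \<otimes>\<^bsub>G\<^esub> a = c \<otimes>\<^bsub>G\<^esub> a"
  shows "b = c"
  using assms by (metis group.right_cancel)

lemma atMost_sq_small:
  assumes R: "regular_uncountable_cardinal_type TYPE('k::wellorder)"
  shows "({..lam::'k} \<times> {..lam}) \<prec> (UNIV::'k set)"
proof (cases "finite {..lam}")
  case True
  then show ?thesis using reg_D(1)[OF R] countable_finite
    by (metis finite_SigmaI finite_lesspoll_infinite)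
next
  case False
  have eq1: "{..lam} = insert lam {..<lam}" by auto
  have inf2: "infinite {..<lam}" using False eq1 by (metis finite_insert)
  have "{..lam} \<approx> {..<lam}" using eq1 infinite_insert_eqpoll[OF inf2, of lam] by simp
  moreover have "({..lam} \<times> {..lam}) \<approx> {..lam}"
    using card_of_Times_same_infinite[OF False] by (simp add: eqpoll_iff_card_of_ordIso)
  ultimately have "({..lam} \<times> {..lam}) \<approx> {..<lam}" by (rule eqpoll_trans[rotated])
  then show ?thesis using reg_D(2)[OF R] by (rule eq_lesspoll_trans)
qed

lemma D_club:
  assumes R: "regular_uncountable_cardinal_type TYPE('k::wellorder)"
    and T: "unbounded (T::'k set)"
  shows "club {\<alpha>. (\<exists>a. a < \<alpha>) \<and> (\<forall>a<\<alpha>. \<exists>y\<in>T. a < y \<and> y < \<alpha>)}" (is "club ?D")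
proof -
  have nx: "\<exists>y. y \<in> T \<and> x < y" for x
  proof -
    obtain w where "x < w" using no_max[OF R] by blast
    moreover obtain y where "y \<in> T" "w \<le> y" using T unfolding unbounded_def by blast
    ultimately show ?thesis by (meson less_le_trans)
  qed
  define nxt where "nxt x = (SOME y. y \<in> T \<and> x < y)" for x
  have nxt: "nxt x \<in> T \<and> x < nxt x" for x unfolding nxt_def by (rule someI_ex[OF nx])
  have unb: "unbounded ?D"
    unfolding unbounded_def
  proof
    fix a
    define f where "f n = (nxt ^^ Suc n) a" for n
    have fT: "f n \<in> T" and fS: "f n < f (Suc n)" for n
      unfolding f_def using nxt by auto
    have f0: "a < f 0" unfolding f_def using nxt by simp
    obtain \<alpha> where al1: "\<forall>n. f n \<le> \<alpha>" and al2: "\<forall>c<\<alpha>. \<exists>n. c < f n"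
      using omega_sup[OF R, of f] by blast
    have "f 0 < \<alpha>" using fS[of 0] al1 by (meson less_le_trans)
    moreover have "\<exists>y\<in>T. c < y \<and> y < \<alpha>" if c: "c < \<alpha>" for c
    proof -
      obtain n where "c < f n" using al2 c by blast
      moreover have "f n < \<alpha>" using fS[of n] al1 by (meson less_le_trans)
      ultimately show ?thesis using fT by blast
    qed
    ultimately have "\<alpha> \<in> ?D" by blast
    moreover have "a \<le> \<alpha>" using f0 al1 by (meson less_imp_le order_trans)
    ultimately show "\<exists>c\<in>?D. a \<le> c" by blast
  qed
  have "closedin ord_top ?D"
  proof (rule closedI_ord[OF R])
    fix x assume x: "x \<notin> ?D"
    obtain w where w: "x < w" "\<And>c. c < w \<Longrightarrow> c \<le> x" using succ_ex[OF R, of x] by blast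
    show "\<exists>U. openin ord_top U \<and> x \<in> U \<and> U \<inter> ?D = {}"
    proof (cases "\<exists>a. a < x")
      case False
      show ?thesis
      proof (intro exI conjI)
        show "openin ord_top {..<w}" by (rule open_lt)
        show "x \<in> {..<w}" using w by simp
        show "{..<w} \<inter> ?D = {}"
        proof (rule ccontr)
          assume "\<not> ?thesis"
          then obtain c a where "c < w" "a < c" by auto
          then have "a < x" using w(2) by (meson less_le_trans)
          with False show False by blast
        qed
      qed
    next
      case True
      then obtain a where a: "a < x" "\<not> (\<exists>y\<in>T. a < y \<and> y < x)" using x by blast
      show ?thesis
      proof (intro exI conjI)
        show "openin ord_top ({a<..} \<inter> {..<w})" by (rule open_ival)
        show "x \<in> {a<..} \<inter> {..<w}" using w a by simp
        show "({a<..} \<inter> {..<w}) \<inter> ?D = {}"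
        proof (rule ccontr)
          assume "\<not> ?thesis"
          then obtain c where c: "a < c" "c < w" "c \<in> ?D" by auto
          then obtain y where "y \<in> T" "a < y" "y < c" by blast
          moreover have "c \<le> x" using w(2) c(2) by blast
          ultimately show False using a(2) by (meson less_le_trans)
        qed
      qed
    qed
  qed
  with unb show ?thesis unfolding club_def by blast
qed

lemma gen_nbhd:
  assumes "generate_topology_on (range lessThan \<union> range greaterThan) U"
    and "lam \<in> U" "a0 < (lam::'k::linorder)"
  shows "\<exists>a<lam. {a<..lam} \<subseteq> U"
  using assms
proof (induction rule: generate_topology_on.induct)
  case Empty
  then show ?case by simp
next
  case (Int A B)
  then obtain a1 a2 where "a1 < lam" "{a1<..lam} \<subseteq> A" "a2 < lam" "{a2<..lam} \<subseteq> B" by auto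
  then show ?case by (intro exI[of _ "max a1 a2"]) auto
next
  case (UN K)
  then obtain k where "k \<in> K" "lam \<in> k" by auto
  with UN show ?case by blast
next
  case (Basis s)
  then consider b where "s = {..<b}" | b where "s = {b<..}" by blast
  then show ?case
  proof cases
    case (1 b)
    then show ?thesis using Basis by (auto intro!: exI[of _ a0])
  next
    case (2 b)
    then show ?thesis using Basis by (auto intro!: exI[of _ b])
  qed
qed


theorem lemma2p2:
  fixes G :: "('a, 'b) monoid_scheme" and X :: "'a topology"
    and T :: "('k::wellorder) set" and e :: "'k \<Rightarrow> 'a"
  assumes "paratopological_group G X"
    and "tychonoff_space X"
    and "regular_uncountable_cardinal_type TYPE('k)"
    and "stationary T"
    and "embedding_map (subtopology ord_top T) X e"
  shows "\<exists>S lam L. S \<subseteq> T \<and> closedin (subtopology ord_top T) S \<and> unbounded S \<and>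
           lam \<in> T \<and> L \<subseteq> {t \<in> T. t \<le> lam} \<and>
           lam \<in> L \<and> lam \<in> ord_top derived_set_of L \<and>
           inj_on (\<lambda>(x, y). e x \<otimes>\<^bsub>G\<^esub> e y) (L \<times> S)"
proof -
  note R = assms(3)
  have grp: "group G" and tsp: "topspace X = carrier G"
    using assms(1) unfolding paratopological_group_def by auto
  have tT: "topspace (subtopology ord_top T) = T" by (simp add: topspace_ord_top[OF R])
  have hm: "homeomorphic_map (subtopology ord_top T) (subtopology X (e ` T)) e"
    using assms(5) unfolding embedding_map_def tT .
  have injT: "inj_on e T" using homeomorphic_imp_injective_map[OF hm] tT by simp
  have "e ` T \<subseteq> topspace (subtopology X (e ` T))"
    using continuous_map_image_subset_topspace[OF homeomorphic_imp_continuous_map[OF hm]] tT by simp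
  then have eT: "e x \<in> carrier G" if "x \<in> T" for x using that tsp by auto
  have clubU: "club (UNIV::'k set)"
    unfolding club_def unbounded_def using closedin_topspace[of "ord_top::'k topology"] topspace_ord_top[OF R] by auto
  have Tunb: "unbounded T" using stat_unbounded[OF R assms(4) clubU] by simp
  obtain lam where lamT: "lam \<in> T" and lamD1: "\<exists>a. a < lam"
      and lamD2: "\<forall>a<lam. \<exists>y\<in>T. a < y \<and> y < lam"
    using D_club[OF R Tunb] assms(4) unfolding stationary_def by blast
  define L where "L = {t \<in> T. t \<le> lam}"
  define N where "N z = {y \<in> T. \<exists>x\<in>L. \<exists>x'\<in>L. x \<noteq> x' \<and> e x \<otimes>\<^bsub>G\<^esub> e z = e x' \<otimes>\<^bsub>G\<^esub> e y}" for z
  have bnd: "\<exists>u. \<forall>y\<in>N z. y < u" for z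
  proof -
    define g where "g y = (SOME p. p \<in> L \<times> L \<and> e (fst p) \<otimes>\<^bsub>G\<^esub> e z = e (snd p) \<otimes>\<^bsub>G\<^esub> e y)" for y
    have g: "g y \<in> L \<times> L \<and> e (fst (g y)) \<otimes>\<^bsub>G\<^esub> e z = e (snd (g y)) \<otimes>\<^bsub>G\<^esub> e y" if "y \<in> N z" for y
    proof -
      from that obtain x x' where "x \<in> L" "x' \<in> L" "e x \<otimes>\<^bsub>G\<^esub> e z = e x' \<otimes>\<^bsub>G\<^esub> e y"
        unfolding N_def by blast
      then have "\<exists>p. p \<in> L \<times> L \<and> e (fst p) \<otimes>\<^bsub>G\<^esub> e z = e (snd p) \<otimes>\<^bsub>G\<^esub> e y"
        by (intro exI[of _ "(x, x')"]) auto
      then show ?thesis unfolding g_def by (rule someI_ex)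
    qed
    have "inj_on g (N z)"
    proof (rule inj_onI)
      fix y1 y2 assume y: "y1 \<in> N z" "y2 \<in> N z" "g y1 = g y2"
      have "e (snd (g y1)) \<otimes>\<^bsub>G\<^esub> e y1 = e (snd (g y1)) \<otimes>\<^bsub>G\<^esub> e y2"
        using g[OF y(1)] g[OF y(2)] y(3) by simp
      moreover have "snd (g y1) \<in> T" using g[OF y(1)] unfolding L_def by auto
      moreover have "y1 \<in> T" "y2 \<in> T" using y unfolding N_def by auto
      ultimately have "e y1 = e y2" using grp_lcan[OF grp] eT by blast
      then show "y1 = y2" using injT \<open>y1 \<in> T\<close> \<open>y2 \<in> T\<close> by (simp add: inj_on_eq_iff)
    qed
    moreover have "g ` N z \<subseteq> {..lam} \<times> {..lam}" using g unfolding L_def by fastforce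
    ultimately have "N z \<lesssim> {..lam} \<times> {..lam}" unfolding lepoll_def by blast
    then have "N z \<prec> (UNIV::'k set)" using atMost_sq_small[OF R] by (rule lesspoll_trans1)
    then show ?thesis by (rule small_bounded[OF R])
  qed
  define C where "C = {\<alpha>::'k. \<forall>z<\<alpha>. \<forall>y\<in>N z. y < \<alpha>}"
  have clubC: "club C" unfolding C_def by (rule closure_club[OF R bnd])
  define S where "S = T \<inter> C"
  have "S \<subseteq> T" unfolding S_def by auto
  moreover have "closedin (subtopology ord_top T) S"
    unfolding closedin_subtopology S_def using clubC unfolding club_def by blast
  moreover have "unbounded S" unfolding S_def by (rule stat_unbounded[OF R assms(4) clubC])
  moreover have "lam \<in> ord_top derived_set_of L"
    unfolding derived_set_of_def
  proof (intro CollectI conjI allI impI)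
    show "lam \<in> topspace ord_top" by (simp add: topspace_ord_top[OF R])
    fix U assume U: "lam \<in> U \<and> openin ord_top U"
    obtain a0 where "a0 < lam" using lamD1 by blast
    from U have "generate_topology_on (range lessThan \<union> range greaterThan) U"
      unfolding ord_top_def openin_topology_generated_by_iff by blast
    then obtain a where "a < lam" "{a<..lam} \<subseteq> U" using gen_nbhd U \<open>a0 < lam\<close> by blast
    then obtain y where "y \<in> T" "a < y" "y < lam" using lamD2 by blast
    then show "\<exists>y. y \<noteq> lam \<and> y \<in> L \<and> y \<in> U" using \<open>{a<..lam} \<subseteq> U\<close> unfolding L_def
      by (intro exI[of _ y]) auto
  qed
  moreover have "inj_on (\<lambda>(x, y). e x \<otimes>\<^bsub>G\<^esub> e y) (L \<times> S)"
  proof (rule inj_onI, clarify)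
    fix x y x' y'
    assume xy: "x \<in> L" "y \<in> S" "x' \<in> L" "y' \<in> S" and eq: "e x \<otimes>\<^bsub>G\<^esub> e y = e x' \<otimes>\<^bsub>G\<^esub> e y'"
    have T4: "x \<in> T" "y \<in> T" "x' \<in> T" "y' \<in> T" using xy unfolding L_def S_def by auto
    show "x = x' \<and> y = y'"
    proof (cases "x = x'")
      case True
      then have "e y = e y'" using grp_lcan[OF grp] eT T4 eq by blast
      then show ?thesis using True injT T4 by (simp add: inj_on_eq_iff)
    next
      case False
      have ne: "y \<noteq> y'"
      proof
        assume "y = y'"
        then have "e x = e x'" using grp_rcan[OF grp] eT T4 eq by blast
        then show False using False injT T4 by (simp add: inj_on_eq_iff)
      qed
      have n1: "y' \<in> N y" unfolding N_def using T4 xy False eq by blast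
      have n2: "y \<in> N y'" unfolding N_def using T4 xy False eq by (metis (mono_tags, lifting) mem_Collect_eq)
      have "y \<in> C" "y' \<in> C" using xy unfolding S_def by auto
      show ?thesis
      proof (cases "y < y'")
        case True
        then have "y' < y'" using \<open>y' \<in> C\<close> n1 unfolding C_def by blast
        then show ?thesis by simp
      next
        case False
        then have "y' < y" using ne by auto
        then have "y < y" using \<open>y \<in> C\<close> n2 unfolding C_def by blast
        then show ?thesis by simp
      qed
    qed
  qed
  moreover have "L \<subseteq> {t \<in> T. t \<le> lam}" "lam \<in> L" using lamT unfolding L_def by auto
  ultimately show ?thesis using lamT by blast
qed

end
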